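(* Let $N\ge 1$ and let $u^1,\dots,u^{N+1}$ be independent variables. Let $\sigma^0=1$ and $\sigma^r$ ($1\le r\le N$) be the elementary symmetric polynomials of $u^1,\dots,u^N$, so $\prod_{i=1}^N(p+u^i)=\sum_{i=0}^Np^i\sigma^{N-i}$, and define $$s^r=\sum_{n=0}^{r}(-1)^n\sigma^{r-n}(u^{N+1})^n,\qquad r=1,\dots,N.$$ Then for all $m,i\in\{1,\dots,N\}$, $$\frac{\partial s^m}{\partial u^i}+\frac{\partial s^m}{\partial u^{N+1}}=(u^{N+1}-u^i)\,P_{m,i},$$ where $P_{m,i}$ is a polynomial in $u^1,\dots,u^{N+1}$ of degree $m-2$ (to be read as $P_{m,i}=0$ when $m=1$).
   Context: The $s^r$ are the coefficients in the expansion $\frac{\prod_{i=1}^N(p+u^i)}{p+u^{N+1}}=\sum_{n=0}^{N-1}p^ns^{N-1-n}+\frac{s^N}{p+u^{N+1}}$ (with $s^0=1$). *)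

theory Defs
  imports "HOL-Analysis.Analysis"
begin

definition esym :: "nat \<Rightarrow> nat \<Rightarrow> (nat \<Rightarrow> real) \<Rightarrow> real" where
  "esym N r u = (\<Sum>S\<in>{S. S \<subseteq> {1..N} \<and> card S = r}. \<Prod>j\<in>S. u j)"

definition sfun :: "nat \<Rightarrow> nat \<Rightarrow> (nat \<Rightarrow> real) \<Rightarrow> real" where
  "sfun N r u = (\<Sum>n=0..r. (-1)^n * esym N (r - n) u * u (N+1) ^ n)"

text \<open>Multivariate real polynomials in the variables u 1, ..., u k, represented by
  their coefficient function on exponent vectors (monomials).\<close>
definition is_mpoly :: "nat \<Rightarrow> ((nat \<Rightarrow> nat) \<Rightarrow> real) \<Rightarrow> bool" where
  "is_mpoly k c \<longleftrightarrow> finite {\<alpha>. c \<alpha> \<noteq> 0} \<and>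
     (\<forall>\<alpha>. c \<alpha> \<noteq> 0 \<longrightarrow> (\<forall>j. j \<notin> {1..k} \<longrightarrow> \<alpha> j = 0))"

definition mpoly_eval :: "nat \<Rightarrow> ((nat \<Rightarrow> nat) \<Rightarrow> real) \<Rightarrow> (nat \<Rightarrow> real) \<Rightarrow> real" where
  "mpoly_eval k c u = (\<Sum>\<alpha>\<in>{\<alpha>. c \<alpha> \<noteq> 0}. c \<alpha> * (\<Prod>j\<in>{1..k}. u j ^ \<alpha> j))"

definition mono_degree :: "nat \<Rightarrow> (nat \<Rightarrow> nat) \<Rightarrow> nat" where
  "mono_degree k \<alpha> = (\<Sum>j\<in>{1..k}. \<alpha> j)"

definition mpoly_has_degree :: "nat \<Rightarrow> ((nat \<Rightarrow> nat) \<Rightarrow> real) \<Rightarrow> nat \<Rightarrow> bool" where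
  "mpoly_has_degree k c d \<longleftrightarrow> (\<exists>\<alpha>. c \<alpha> \<noteq> 0 \<and> mono_degree k \<alpha> = d) \<and>
     (\<forall>\<alpha>. c \<alpha> \<noteq> 0 \<longrightarrow> mono_degree k \<alpha> \<le> d)"

end

theory Submission
  imports Defs
begin

definition esymS :: "nat set \<Rightarrow> nat \<Rightarrow> (nat \<Rightarrow> real) \<Rightarrow> real" where
  "esymS A r u = (\<Sum>S\<in>{S. S \<subseteq> A \<and> card S = r}. \<Prod>j\<in>S. u j)"

lemma esym_esymS: "esym N r u = esymS {1..N} r u"
  by (simp add: esym_def esymS_def)

lemma esymS_0: "finite A \<Longrightarrow> esymS A 0 u = 1"
proof -
  assume "finite A"
  have "S = {}" if "S \<subseteq> A" "card S = 0" for S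
    using that \<open>finite A\<close> finite_subset card_0_eq by blast
  then have "{S. S \<subseteq> A \<and> card S = 0} = {{}}"
    by auto
  then show ?thesis by (simp add: esymS_def)
qed

lemma esymS_upd: "j \<notin> A \<Longrightarrow> esymS A r (u(j:=x)) = esymS A r u"
  unfolding esymS_def
  by (intro sum.cong refl prod.cong) auto

lemma esymS_Suc:
  assumes "finite A" "i \<in> A"
  shows "esymS A (Suc r) u = esymS (A-{i}) (Suc r) u + u i * esymS (A-{i}) r u"
proof -
  let ?X = "{S. S \<subseteq> A-{i} \<and> card S = Suc r}"
  let ?Y = "{S. S \<subseteq> A-{i} \<and> card S = r}"
  have fin: "finite (Pow A)" using assms by simp
  have split: "{S. S \<subseteq> A \<and> card S = Suc r} = ?X \<union> insert i ` ?Y"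
  proof (intro equalityI subsetI)
    fix S assume S: "S \<in> {S. S \<subseteq> A \<and> card S = Suc r}"
    show "S \<in> ?X \<union> insert i ` ?Y"
    proof (cases "i \<in> S")
      case True
      have fS: "finite S" using S assms finite_subset by auto
      have "S = insert i (S - {i})" using True by auto
      moreover have "S - {i} \<in> ?Y" using S True fS by auto
      ultimately show ?thesis by blast
    next
      case False then show ?thesis using S by auto
    qed
  next
    fix S assume "S \<in> ?X \<union> insert i ` ?Y"
    then show "S \<in> {S. S \<subseteq> A \<and> card S = Suc r}"
    proof
      assume "S \<in> ?X" then show ?thesis by auto
    next
      assume "S \<in> insert i ` ?Y"
      then obtain T where T: "T \<in> ?Y" "S = insert i T" by auto
      have "finite T" using T assms finite_subset by blast
      moreover have "i \<notin> T" using T by auto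
      ultimately show ?thesis using T assms by auto
    qed
  qed
  have finX: "finite ?X" and finY: "finite ?Y"
    using assms by (auto intro: finite_subset[of _ "Pow A"])
  have disj: "?X \<inter> insert i ` ?Y = {}" by auto
  have inj: "inj_on (insert i) ?Y"
    by (rule inj_onI) (metis Diff_insert_absorb Diff_iff mem_Collect_eq singletonI subsetD)
  have "esymS A (Suc r) u = (\<Sum>S\<in>?X. \<Prod>j\<in>S. u j) + (\<Sum>S\<in>insert i ` ?Y. \<Prod>j\<in>S. u j)"
    unfolding esymS_def split using finX finY disj by (simp add: sum.union_disjoint)
  also have "(\<Sum>S\<in>insert i ` ?Y. \<Prod>j\<in>S. u j) = (\<Sum>S\<in>?Y. \<Prod>j\<in>insert i S. u j)"
    using inj by (simp add: sum.reindex)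
  also have "\<dots> = (\<Sum>S\<in>?Y. u i * (\<Prod>j\<in>S. u j))"
  proof (rule sum.cong[OF refl])
    fix S assume S: "S \<in> ?Y"
    then have "finite S" "i \<notin> S" using assms finite_subset by auto
    then show "(\<Prod>j\<in>insert i S. u j) = u i * (\<Prod>j\<in>S. u j)" by simp
  qed
  finally show ?thesis by (simp add: esymS_def sum_distrib_left)
qed

lemma deriv_i:
  assumes "1 \<le> i" "i \<le> N"
  shows "deriv (\<lambda>x. sfun N m (u(i := x))) (u i)
         = (\<Sum>n<m. (-1)^n * esymS ({1..N}-{i}) (m-1-n) u * u (N+1) ^ n)"
proof -
  define B where "B = {1..N} - {i}"
  define D where "D r = (case r of 0 \<Rightarrow> 0 | Suc k \<Rightarrow> esymS B k u)" for r
  have iA: "i \<in> {1..N}" using assms by auto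
  have E: "((\<lambda>x. esym N r (u(i:=x))) has_field_derivative D r) (at x0)" for r x0
  proof (cases r)
    case 0
    then have "(\<lambda>x. esym N r (u(i:=x))) = (\<lambda>x. 1)" by (simp add: esym_esymS esymS_0)
    then show ?thesis using 0 by (simp add: D_def)
  next
    case (Suc k)
    have "(\<lambda>x. esym N r (u(i:=x))) = (\<lambda>x. esymS B (Suc k) u + x * esymS B k u)"
      using Suc iA by (simp add: esym_esymS esymS_Suc B_def esymS_upd)
    then show ?thesis using Suc by (auto simp: D_def intro!: derivative_eq_intros)
  qed
  have feq: "(\<lambda>x. sfun N m (u(i := x))) = (\<lambda>x. \<Sum>n=0..m. (-1)^n * esym N (m-n) (u(i:=x)) * u (N+1) ^ n)"
    using assms by (simp add: sfun_def)
  have "((\<lambda>x. sfun N m (u(i := x))) has_field_derivative (\<Sum>n=0..m. (-1)^n * D (m-n) * u (N+1) ^ n)) (at (u i))"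
    unfolding feq by (intro DERIV_sum DERIV_cmult_right DERIV_cmult E)
  then have "deriv (\<lambda>x. sfun N m (u(i := x))) (u i) = (\<Sum>n=0..m. (-1)^n * D (m-n) * u (N+1) ^ n)"
    by (rule DERIV_imp_deriv)
  also have "\<dots> = (\<Sum>n<m. (-1)^n * D (m-n) * u (N+1) ^ n)"
    by (simp add: sum.atLeast0_atMost_Suc atLeast0LessThan[symmetric] D_def sum.last_plus  del: sum.op_ivl_Suc)
  also have "\<dots> = (\<Sum>n<m. (-1)^n * esymS B (m-1-n) u * u (N+1) ^ n)"
  proof (rule sum.cong[OF refl])
    fix n assume "n \<in> {..<m}"
    then have "m - n = Suc (m-1-n)" by auto
    then show "(-1)^n * D (m-n) * u (N+1) ^ n = (-1)^n * esymS B (m-1-n) u * u (N+1) ^ n"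
      by (simp add: D_def)
  qed
  finally show ?thesis by (simp add: B_def)
qed

lemma deriv_t:
  shows "deriv (\<lambda>x. sfun N m (u(N+1 := x))) (u (N+1))
         = (\<Sum>n=0..m. (-1)^n * esym N (m-n) u * (of_nat n * u (N+1) ^ (n-1)))"
proof -
  have feq: "(\<lambda>x. sfun N m (u(N+1 := x))) = (\<lambda>x. \<Sum>n=0..m. (-1)^n * esym N (m-n) u * x ^ n)"
    by (simp add: sfun_def esym_esymS esymS_upd)
  have "((\<lambda>x. \<Sum>n=0..m. (-1)^n * esym N (m-n) u * x ^ n) has_field_derivative
      (\<Sum>n=0..m. (-1)^n * esym N (m-n) u * (of_nat n * u (N+1) ^ (n - Suc 0)))) (at (u (N+1)))"
    by (intro DERIV_sum DERIV_cmult DERIV_pow)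
  then show ?thesis unfolding feq
    by (subst DERIV_imp_deriv) auto
qed

lemma alg_identity:
  fixes \<tau> \<sigma> :: "nat \<Rightarrow> real" and a t :: real
  assumes t0: "\<tau> 0 = 1" and s0: "\<sigma> 0 = 1" and sS: "\<And>r. \<sigma> (Suc r) = \<tau> (Suc r) + a * \<tau> r"
  shows "(\<Sum>n<m. (-1)^n * \<tau> (m-1-n) * t^n)
       + (\<Sum>n=0..m. (-1)^n * \<sigma> (m-n) * (of_nat n * t^(n-1)))
       = (t - a) * (\<Sum>n<m-1. (-1)^n * of_nat (n+1) * t^n * \<tau> (m-2-n))"
proof -
  define S where "S m = (\<Sum>n=0..m. (-1)^n * \<sigma> (m-n) * t^n)" for m
  define A where "A m = (\<Sum>n<m. (-1)^n * \<tau> (m-1-n) * t^n)" for m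
  define B where "B m = (\<Sum>n=0..m. (-1)^n * \<sigma> (m-n) * (of_nat n * t^(n-1)))" for m
  define P where "P m = (\<Sum>n<m-1. (-1)^n * of_nat (n+1) * t^n * \<tau> (m-2-n))" for m
  have A0: "A 0 = 0" by (simp add: A_def)
  have AS: "A (Suc m) = \<tau> m - t * A m" for m
  proof -
    have "A (Suc m) = \<tau> m + (\<Sum>n<m. (-1)^(Suc n) * \<tau> (m-1-n) * t^(Suc n))"
      unfolding A_def by (simp only: sum.lessThan_Suc_shift) simp
    also have "\<dots> = \<tau> m - t * A m"
      unfolding A_def by (simp add: sum_distrib_left algebra_simps sum_negf)
    finally show ?thesis .
  qed
  have S0: "S 0 = 1" by (simp add: S_def s0)
  have SS: "S (Suc m) = \<sigma> (Suc m) - t * S m" for m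
  proof -
    have "S (Suc m) = \<sigma> (Suc m) + (\<Sum>n=0..m. (-1)^(Suc n) * \<sigma> (m-n) * t^(Suc n))"
      unfolding S_def by (simp only: sum.atLeast0_atMost_Suc_shift) simp
    also have "\<dots> = \<sigma> (Suc m) - t * S m"
      unfolding S_def by (simp add: sum_distrib_left algebra_simps sum_negf)
    finally show ?thesis .
  qed
  have B0: "B 0 = 0" by (simp add: B_def)
  have BS: "B (Suc m) = - S m - t * B m" for m
  proof -
    have "B (Suc m) = (\<Sum>n=0..m. (-1)^(Suc n) * \<sigma> (m-n) * (of_nat (Suc n) * t^n))"
      unfolding B_def by (simp only: sum.atLeast0_atMost_Suc_shift) simp
    also have "\<dots> = (\<Sum>n=0..m. - ((-1)^n * \<sigma> (m-n) * t^n) - t * ((-1)^n * \<sigma> (m-n) * (of_nat n * t^(n-1))))"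
      by (rule sum.cong) (auto simp: algebra_simps power_eq_if)
    also have "\<dots> = - S m - t * B m"
      by (simp add: S_def B_def sum_subtractf sum_distrib_left sum_negf)
    finally show ?thesis .
  qed
  have P0: "P 0 = 0" and P1: "P 1 = 0" by (simp_all add: P_def)
  have PS: "P (Suc (Suc m)) = A (Suc m) - t * P (Suc m)" for m
  proof -
    have "P (Suc (Suc m)) = \<tau> m + (\<Sum>n<m. (-1)^(Suc n) * of_nat (n+2) * t^(Suc n) * \<tau> (m-1-n))"
    proof -
      have "P (Suc (Suc m)) = (\<Sum>n<Suc m. (-1)^n * of_nat (n+1) * t^n * \<tau> (m-n))"
        unfolding P_def by (simp add: numeral_2_eq_2)
      also have "\<dots> = \<tau> m + (\<Sum>n<m. (-1)^(Suc n) * of_nat (n+2) * t^(Suc n) * \<tau> (m-1-n))"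
        by (simp only: sum.lessThan_Suc_shift) (simp add: numeral_2_eq_2 add.commute)
      finally show ?thesis .
    qed
    moreover have "A (Suc m) = \<tau> m + (\<Sum>n<m. (-1)^(Suc n) * \<tau> (m-1-n) * t^(Suc n))"
      unfolding A_def by (simp only: sum.lessThan_Suc_shift) simp
    moreover have "t * P (Suc m) = (\<Sum>n<m. (-1)^n * of_nat (n+1) * t^(Suc n) * \<tau> (m-1-n))"
      unfolding P_def by (simp add: sum_distrib_left algebra_simps)
    ultimately show ?thesis
      by (simp add: algebra_simps sum_subtractf[symmetric] sum.distrib[symmetric])
  qed
  have SA: "S k = \<tau> k - (t - a) * A k" for k
  proof (induction k)
    case 0 then show ?case by (simp add: S0 A0 t0)
  next
    case (Suc k) then show ?case by (simp only: SS AS sS Suc.IH) (simp add: algebra_simps)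
  qed
  have main: "A m + B m = (t - a) * P m" for m
  proof (induction m rule: nat_less_induct)
    case (1 m)
    show ?case
    proof (cases m)
      case 0 then show ?thesis by (simp add: A0 B0 P0)
    next
      case (Suc k)
      show ?thesis
      proof (cases k)
        case 0 then show ?thesis using Suc using P1 by (simp add: AS BS A0 B0 S0 t0)
      next
        case (Suc j)
        have IH: "A k + B k = (t - a) * P k" using 1 \<open>m = Suc k\<close> by simp
        have "A m + B m = \<tau> k - S k - t * (A k + B k)"
          using \<open>m = Suc k\<close> by (simp add: AS BS algebra_simps)
        also have "\<dots> = (t - a) * (A k - t * P k)"
        proof -
          have Bk: "B k = (t - a) * P k - A k" using IH by simp
          show ?thesis by (simp only: Bk SA[of k]) (simp add: algebra_simps)
        qed
        also have "\<dots> = (t - a) * P m"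
          using \<open>m = Suc k\<close> Suc PS[of j] by simp
        finally show ?thesis .
      qed
    qed
  qed
  show ?thesis using main[of m] by (simp add: A_def B_def P_def)
qed


theorem lemma9:
  fixes N m i :: nat
  assumes "N \<ge> 1" and "1 \<le> m" and "m \<le> N" and "1 \<le> i" and "i \<le> N"
  shows "\<exists>c. is_mpoly (N+1) c \<and>
           (if m = 1 then (\<forall>\<alpha>. c \<alpha> = 0) else mpoly_has_degree (N+1) c (m - 2)) \<and>
           (\<forall>u :: nat \<Rightarrow> real.
              deriv (\<lambda>x. sfun N m (u(i := x))) (u i)
              + deriv (\<lambda>x. sfun N m (u(N+1 := x))) (u (N+1))
              = (u (N+1) - u i) * mpoly_eval (N+1) c u)"
proof -
  define B where "B = {1..N} - {i}"
  define I where "I = (SIGMA n:{..<m-1}. {S. S \<subseteq> B \<and> card S = m-2-n})"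
  define mono :: "nat \<times> nat set \<Rightarrow> nat \<Rightarrow> nat" where
    "mono p = (\<lambda>j. (if j \<in> snd p then 1 else 0) + (if j = N+1 then fst p else 0))" for p
  define coef :: "nat \<times> nat set \<Rightarrow> real" where "coef p = (-1)^(fst p) * real (fst p + 1)" for p
  define c where "c \<alpha> = (if \<alpha> \<in> mono ` I then coef (the_inv_into I mono \<alpha>) else 0)" for \<alpha>
  have finB: "finite B" by (simp add: B_def)
  have finI: "finite I" unfolding I_def
    by (intro finite_SigmaI) (auto intro: finite_subset[of _ "Pow B"] simp: finB)
  have Isub: "snd p \<subseteq> B" "fst p < m - 1" if "p \<in> I" for p
    using that by (auto simp: I_def)
  have Icard: "card (snd p) = m - 2 - fst p" if "p \<in> I" for p
    using that by (auto simp: I_def)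
  have fst_rec: "fst p = mono p (N+1)" if "p \<in> I" for p
    using Isub(1)[OF that] by (auto simp: mono_def B_def)
  have snd_rec: "snd p = {j. j \<noteq> N+1 \<and> mono p j = 1}" if "p \<in> I" for p
    using Isub(1)[OF that] by (auto simp: mono_def B_def)
  have inj: "inj_on mono I"
  proof (rule inj_onI)
    fix p q assume "p \<in> I" "q \<in> I" "mono p = mono q"
    then have "fst p = fst q" "snd p = snd q" using fst_rec snd_rec by metis+
    then show "p = q" by (simp add: prod_eq_iff)
  qed
  have cmono: "c (mono p) = coef p" if "p \<in> I" for p
    using that inj by (simp add: c_def the_inv_into_f_f)
  have coef_nz: "coef p \<noteq> 0" for p by (simp add: coef_def)
  have supp: "{\<alpha>. c \<alpha> \<noteq> 0} = mono ` I"
    using cmono coef_nz by (auto simp: c_def)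
  have degmono: "mono_degree (N+1) (mono p) = m - 2" if "p \<in> I" for p
  proof -
    have "mono_degree (N+1) (mono p) = (\<Sum>j\<in>{1..N+1}. (if j \<in> snd p then 1 else 0)) + (\<Sum>j\<in>{1..N+1}. (if j = N+1 then fst p else 0))"
      by (simp add: mono_degree_def mono_def sum.distrib)
    also have "(\<Sum>j\<in>{1..N+1}. (if j \<in> snd p then 1 else 0)) = card ({1..N+1} \<inter> snd p)"
      by (metis (no_types, lifting) card_eq_sum finite_atLeastAtMost sum.cong sum.inter_restrict)
    also have "{1..N+1} \<inter> snd p = snd p" using Isub(1)[OF that] by (auto simp: B_def)
    also have "(\<Sum>j\<in>{1..N+1}. (if j = N+1 then fst p else 0)) = fst p" by simp
    finally show ?thesis using Icard[OF that] Isub(2)[OF that] by simp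
  qed
  have polyc: "is_mpoly (N+1) c"
    unfolding is_mpoly_def supp
  proof (intro conjI allI impI)
    show "finite (mono ` I)" using finI by simp
  next
    fix \<alpha> j assume "c \<alpha> \<noteq> 0" "j \<notin> {1..N+1}"
    then obtain p where p: "p \<in> I" "\<alpha> = mono p" using supp by blast
    then show "\<alpha> j = 0" using Isub(1)[OF p(1)] \<open>j \<notin> {1..N+1}\<close> by (auto simp: mono_def B_def)
  qed
  have degc: "if m = 1 then (\<forall>\<alpha>. c \<alpha> = 0) else mpoly_has_degree (N+1) c (m - 2)"
  proof (cases "m = 1")
    case True
    then have "I = {}" by (simp add: I_def)
    then show ?thesis using True by (simp add: c_def)
  next
    case False
    have p0: "(m-2, {}) \<in> I" using False assms by (auto simp: I_def)
    have "mpoly_has_degree (N+1) c (m - 2)"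
      unfolding mpoly_has_degree_def
    proof (intro conjI allI impI)
      show "\<exists>\<alpha>. c \<alpha> \<noteq> 0 \<and> mono_degree (N + 1) \<alpha> = m - 2"
        using cmono[OF p0] coef_nz degmono[OF p0] by metis
    next
      fix \<alpha> assume "c \<alpha> \<noteq> 0"
      then obtain p where p: "p \<in> I" "\<alpha> = mono p" using supp by blast
      then show "mono_degree (N + 1) \<alpha> \<le> m - 2" using degmono by simp
    qed
    then show ?thesis using False by simp
  qed
  have evalc: "mpoly_eval (N+1) c u = (\<Sum>n<m-1. (-1)^n * of_nat (n+1) * u (N+1)^n * esymS B (m-2-n) u)" for u
  proof -
    have prodmono: "(\<Prod>j\<in>{1..N+1}. u j ^ mono p j) = (\<Prod>j\<in>snd p. u j) * u (N+1) ^ fst p" if "p \<in> I" for p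
    proof -
      have "(\<Prod>j\<in>{1..N+1}. u j ^ mono p j) = (\<Prod>j\<in>{1..N+1}. (if j \<in> snd p then u j else 1)) * (\<Prod>j\<in>{1..N+1}. (if j = N+1 then u j ^ fst p else 1))"
        unfolding prod.distrib[symmetric]
        by (rule prod.cong[OF refl]) (simp add: mono_def power_add)
      also have "(\<Prod>j\<in>{1..N+1}. (if j \<in> snd p then u j else 1)) = (\<Prod>j\<in>{1..N+1} \<inter> snd p. u j)"
        by (simp add: prod.inter_restrict)
      also have "{1..N+1} \<inter> snd p = snd p" using Isub(1)[OF that] by (auto simp: B_def)
      finally show ?thesis by simp
    qed
    have "mpoly_eval (N+1) c u = (\<Sum>\<alpha>\<in>mono ` I. c \<alpha> * (\<Prod>j\<in>{1..N+1}. u j ^ \<alpha> j))"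
      by (simp add: mpoly_eval_def supp)
    also have "\<dots> = (\<Sum>p\<in>I. coef p * ((\<Prod>j\<in>snd p. u j) * u (N+1) ^ fst p))"
      using inj by (simp only: sum.reindex o_def) (rule sum.cong[OF refl], simp only: cmono prodmono)
    also have "\<dots> = (\<Sum>n<m-1. \<Sum>S\<in>{S. S \<subseteq> B \<and> card S = m-2-n}. coef (n,S) * ((\<Prod>j\<in>S. u j) * u (N+1) ^ n))"
      unfolding I_def
      by (subst sum.Sigma) (auto intro: finite_subset[of _ "Pow B"] sum.cong simp: finB split_beta)
    also have "\<dots> = (\<Sum>n<m-1. (-1)^n * of_nat (n+1) * u (N+1)^n * esymS B (m-2-n) u)"
      by (simp add: esymS_def sum_distrib_left coef_def mult_ac)
    finally show ?thesis .
  qed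
  have derivs: "deriv (\<lambda>x. sfun N m (u(i := x))) (u i)
              + deriv (\<lambda>x. sfun N m (u(N+1 := x))) (u (N+1))
              = (u (N+1) - u i) * mpoly_eval (N+1) c u" for u
  proof -
    have iA: "i \<in> {1..N}" using assms by auto
    have "deriv (\<lambda>x. sfun N m (u(i := x))) (u i)
              + deriv (\<lambda>x. sfun N m (u(N+1 := x))) (u (N+1))
        = (\<Sum>n<m. (-1)^n * esymS B (m-1-n) u * u (N+1) ^ n)
          + (\<Sum>n=0..m. (-1)^n * esym N (m-n) u * (of_nat n * u (N+1) ^ (n-1)))"
      using deriv_i[OF assms(4,5)] deriv_t by (simp add: B_def)
    also have "\<dots> = (u (N+1) - u i) * (\<Sum>n<m-1. (-1)^n * of_nat (n+1) * u (N+1)^n * esymS B (m-2-n) u)"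
      apply (rule alg_identity)
      apply (simp_all only: esymS_0 finB esym_esymS esymS_Suc[OF finite_atLeastAtMost iA] B_def)
      apply (simp_all add: esymS_0)
      done
    finally show ?thesis by (simp only: evalc)
  qed
  show ?thesis using polyc degc derivs by blast
qed

end
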